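(* Let $C$ be a linear code over $\mathbb{F}_q$ of dimension $k$ with weight hierarchy $(d_1,\dots,d_k)$. Assume that there exists an integer $\alpha$ such that \[ d_i = \alpha\,\frac{q^i-1}{q^{i-1}(q-1)} \quad \text{for all } 1\leqslant i\leqslant k. \] Then $C$ is a constant weight code, and all its non-zero codewords have weight $\alpha$.
   Context: For a subcode $D \subseteq C \subseteq \mathbb{F}_q^n$ (a linear subspace), $\mathrm{Supp}(D)=\{x\in\{1,\dots,n\} : \exists d\in D,\ d_x\neq 0\}$ and $w(D)=\#\mathrm{Supp}(D)$; the weight of a codeword is the weight of the subcode it spans. For $1\leqslant r\leqslant k$, $d_r=\min\{w(D) : D\subseteq C \text{ a subcode of dimension } r\}$, and $(d_1,\dots,d_k)$ is the weight hierarchy. A constant weight code is a code all of whose non-zero codewords have the same weight. *)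

theory Defs
  imports "HOL-Analysis.Analysis"
begin

text \<open>Words of length n over the field 'a are vectors of type 'a^'n (n = CARD('n));
  subcodes are subspaces w.r.t. scalar multiplication (*s), dimension is vec.dim.\<close>

definition code_supp :: "('a::field ^ 'n) set \<Rightarrow> 'n set" where
  "code_supp D = {x. \<exists>d\<in>D. d $ x \<noteq> 0}"

definition code_wt :: "('a::field ^ 'n) set \<Rightarrow> nat" where
  "code_wt D = card (code_supp D)"

definition word_wt :: "'a::field ^ 'n \<Rightarrow> nat" where
  "word_wt c = code_wt (vec.span {c})"

definition gen_hamming_wt :: "('a::field ^ 'n) set \<Rightarrow> nat \<Rightarrow> nat" where
  "gen_hamming_wt C r =
     Min {code_wt D | D. D \<subseteq> C \<and> vec.subspace D \<and> vec.dim D = r}"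

end

theory Submission imports Defs begin

lemma card_span_insert:
  fixes S :: "('a::{field,finite} ^ 'n) set"
  assumes S: "vec.subspace S" and b: "b \<notin> S"
  shows "card (vec.span (insert b S)) = CARD('a) * card S"
proof -
  have sp: "vec.span S = S" using S vec.span_eq_iff by blast
  have eq: "vec.span (insert b S) = (\<lambda>(k,y). k *s b + y) ` (UNIV \<times> S)"
  proof
    show "vec.span (insert b S) \<subseteq> (\<lambda>(k,y). k *s b + y) ` (UNIV \<times> S)"
    proof
      fix x assume "x \<in> vec.span (insert b S)"
      then obtain k where "x - k *s b \<in> S" using vec.span_insert sp by blast
      then show "x \<in> (\<lambda>(k,y). k *s b + y) ` (UNIV \<times> S)"
        by (intro image_eqI[of _ _ "(k, x - k *s b)"]) auto
    qed
  next
    show "(\<lambda>(k,y). k *s b + y) ` (UNIV \<times> S) \<subseteq> vec.span (insert b S)"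
      unfolding vec.span_insert sp by (auto, rule_tac x=a in exI, simp)
  qed
  have inj: "inj_on (\<lambda>(k,y). k *s b + y) (UNIV \<times> S)"
  proof (rule inj_onI, clarify)
    fix k y k' y' assume y: "y \<in> S" and y': "y' \<in> S" and e: "k *s b + y = k' *s b + y'"
    have d: "(k - k') *s b = y' - y" using e
      by (metis add_diff_cancel_left add_diff_cancel_right vec.scale_left_diff_distrib)
    have yS: "y' - y \<in> S" using S y y' vec.subspace_diff by blast
    have kk: "k = k'"
    proof (rule ccontr)
      assume h: "k \<noteq> k'"
      have "inverse (k - k') *s ((k - k') *s b) = b" using h by (simp only: vec.scale_scale, simp)
      then have "b = inverse (k - k') *s (y' - y)" using d by metis
      also have "\<dots> \<in> S" using yS S vec.subspace_scale by blast
      finally show False using b by simp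
    qed
    then show "k = k' \<and> y = y'" using e by simp
  qed
  show ?thesis unfolding eq card_image[OF inj] card_cartesian_product by simp
qed

lemma card_span_indep:
  fixes B :: "('a::{field,finite} ^ 'n) set"
  assumes "finite B" "vec.independent B"
  shows "card (vec.span B) = CARD('a) ^ card B"
  using assms
proof (induction B rule: finite_induct)
  case empty
  then show ?case by simp
next
  case (insert b B)
  have ind: "vec.independent B" and nb: "b \<notin> vec.span B"
    using insert(2,4) vec.independent_insert by metis+
  have "vec.span (insert b B) = vec.span (insert b (vec.span B))"
    by (simp only: vec.span_insert vec.span_span)
  then have "card (vec.span (insert b B)) = CARD('a) * card (vec.span B)"
    using card_span_insert[OF vec.subspace_span nb] by simp
  then show ?case using insert ind by simp
qed

lemma card_subspace:
  fixes C :: "('a::{field,finite} ^ 'n) set"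
  assumes "vec.subspace C"
  shows "card C = CARD('a) ^ vec.dim C"
proof -
  obtain B where B: "B \<subseteq> C" "vec.independent B" "C \<subseteq> vec.span B" "card B = vec.dim C"
    using vec.basis_exists by blast
  have "vec.span B = C" using B assms vec.span_minimal by blast
  then show ?thesis using card_span_indep[OF _ B(2)] B(4) by simp
qed


lemma supp_single:
  fixes c :: "'a::field ^ 'n"
  shows "code_supp (vec.span {c}) = {x. c $ x \<noteq> 0}"
  unfolding code_supp_def vec.span_singleton
proof (intro set_eqI iffI)
  fix x assume "x \<in> {x. c $ x \<noteq> 0}"
  then show "x \<in> {x. \<exists>d\<in>range (\<lambda>k. k *s c). d $ x \<noteq> 0}"
    by (intro CollectI bexI[of _ "1 *s c"] rangeI) auto
qed auto

lemma word_wt_eq: "word_wt c = card {x. c $ x \<noteq> 0}"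
  unfolding word_wt_def code_wt_def supp_single ..

lemma fiber_card:
  fixes C :: "('a::{field,finite} ^ 'n) set"
  assumes C: "vec.subspace C" and x: "x \<in> code_supp C"
  shows "CARD('a) * card {c\<in>C. c $ x = 0} = card C"
proof -
  obtain d where d: "d \<in> C" "d $ x \<noteq> 0" using x unfolding code_supp_def by blast
  define c0 where "c0 = inverse (d $ x) *s d"
  have c0: "c0 \<in> C" "c0 $ x = 1" using d C vec.subspace_scale unfolding c0_def by auto
  define K where "K = {c\<in>C. c $ x = 0}"
  have K: "vec.subspace K" using C unfolding K_def vec.subspace_def by auto
  have nK: "c0 \<notin> K" using c0 unfolding K_def by auto
  have spK: "vec.span K = K" using K vec.span_eq_iff by blast
  have "vec.span (insert c0 K) = C"
  proof
    show "vec.span (insert c0 K) \<subseteq> C" using c0 C K_def vec.span_minimal by (metis (no_types, lifting) insert_subset mem_Collect_eq subsetI)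
  next
    show "C \<subseteq> vec.span (insert c0 K)"
    proof
      fix c assume c: "c \<in> C"
      have "c - (c $ x) *s c0 \<in> K" unfolding K_def using c c0 C vec.subspace_scale[OF C c0(1)] vec.subspace_diff[OF C c] by auto
      then show "c \<in> vec.span (insert c0 K)" unfolding vec.span_insert spK by blast
    qed
  qed
  then show ?thesis using card_span_insert[OF K nK] K_def by simp
qed

lemma sum_wt:
  fixes C :: "('a::{field,finite} ^ 'n) set"
  assumes C: "vec.subspace C"
  shows "(\<Sum>c\<in>C. word_wt c) = (\<Sum>x\<in>code_supp C. card C - card {c\<in>C. c $ x = 0})"
proof -
  have "(\<Sum>c\<in>C. word_wt c) = (\<Sum>c\<in>C. \<Sum>x\<in>UNIV. if c $ x \<noteq> 0 then 1 else 0)"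
    unfolding word_wt_eq by (simp add: sum.If_cases)
  also have "\<dots> = (\<Sum>x\<in>UNIV. \<Sum>c\<in>C. if c $ x \<noteq> 0 then 1 else 0)" by (rule sum.swap)
  also have "\<dots> = (\<Sum>x\<in>UNIV. card {c\<in>C. c $ x \<noteq> 0})"
    by (simp add: sum.If_cases Collect_conj_eq Int_commute)
  also have "\<dots> = (\<Sum>x\<in>code_supp C. card {c\<in>C. c $ x \<noteq> 0})"
    by (rule sum.mono_neutral_right) (auto simp: code_supp_def)
  also have "\<dots> = (\<Sum>x\<in>code_supp C. card C - card {c\<in>C. c $ x = 0})"
  proof (rule sum.cong[OF refl])
    fix x
    have "{c\<in>C. c $ x \<noteq> 0} = C - {c\<in>C. c $ x = 0}" by auto
    then show "card {c\<in>C. c $ x \<noteq> 0} = card C - card {c\<in>C. c $ x = 0}"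
      by (simp add: card_Diff_subset)
  qed
  finally show ?thesis .
qed


lemma finite_wts:
  fixes P :: "('a::{field,finite} ^ 'n) set \<Rightarrow> bool"
  shows "finite {code_wt D | D. P D}"
  by (rule finite_subset[of _ "range code_wt"]) (auto intro: finite_imageI[OF finite])

theorem corollary2:
  fixes C :: "('a::{field,finite} ^ 'n) set" and k :: nat and \<alpha> :: int
  assumes "vec.subspace C"
    and "vec.dim C = k"
    and "\<forall>i\<in>{1..k}. real (gen_hamming_wt C i) =
            of_int \<alpha> * (real CARD('a) ^ i - 1) / (real CARD('a) ^ (i - 1) * (real CARD('a) - 1))"
  shows "\<forall>c\<in>C. c \<noteq> 0 \<longrightarrow> int (word_wt c) = \<alpha>"
proof (intro ballI impI)
  fix c assume cC: "c \<in> C" and c0: "c \<noteq> 0"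
  note C = assms(1)
  define q where "q = CARD('a)"
  have q2: "q \<ge> 2"
  proof -
    have "{0::'a, 1} \<subseteq> UNIV" by simp
    then have "card {0::'a, 1} \<le> q" unfolding q_def by (rule card_mono[OF finite])
    then show ?thesis by simp
  qed
  have indc: "vec.independent {c}" using c0 by (simp add: vec.independent_insert)
  have "card {c} \<le> k" using vec.independent_card_le_dim[OF _ indc] cC assms(2) by auto
  then obtain m where km: "k = Suc m" by (cases k) auto
  have dim1: "\<And>c'. c' \<noteq> 0 \<Longrightarrow> vec.dim (vec.span {c'}) = 1"
    by (simp add: vec.dim_span vec.dim_eq_card_independent vec.independent_insert)
  have "real (gen_hamming_wt C 1) = of_int \<alpha> * (real q - 1) / (real q - 1)"
    using assms(3) km unfolding q_def by auto
  then have d1: "real (gen_hamming_wt C 1) = of_int \<alpha>" using q2 by simp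
  have lb: "gen_hamming_wt C 1 \<le> word_wt c'" if "c' \<in> C" "c' \<noteq> 0" for c'
  proof -
    have "word_wt c' \<in> {code_wt D | D. D \<subseteq> C \<and> vec.subspace D \<and> vec.dim D = 1}"
      unfolding word_wt_def using that dim1 vec.span_minimal[OF _ C] vec.subspace_span by blast
    then show ?thesis unfolding gen_hamming_wt_def by (rule Min_le[OF finite_wts])
  qed
  have "{code_wt D | D. D \<subseteq> C \<and> vec.subspace D \<and> vec.dim D = k} = {code_wt C}"
    using vec.subspace_dim_equal[OF _ C] C assms(2) by (auto intro!: exI[of _ C]; metis order_refl)
  then have dk: "gen_hamming_wt C k = code_wt C" unfolding gen_hamming_wt_def by simp
  have "real (code_wt C) = of_int \<alpha> * (real q ^ k - 1) / (real q ^ m * (real q - 1))"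
  proof -
    have "k \<in> {1..k}" using km by simp
    then have "real (gen_hamming_wt C k) = of_int \<alpha> * (real q ^ k - 1) / (real q ^ (k - 1) * (real q - 1))"
      using assms(3) unfolding q_def by blast
    then show ?thesis using dk km by simp
  qed
  then have wC: "real (code_wt C) * (real q ^ m * (real q - 1)) = of_int \<alpha> * (real q ^ k - 1)"
    using q2 by (simp add: field_simps)
  have cardC: "card C = q * q ^ m" using card_subspace[OF C] assms(2) km q_def by simp
  have fib: "card C - card {c\<in>C. c $ x = 0} = q ^ m * (q - 1)" if "x \<in> code_supp C" for x
  proof -
    have "q * card {c\<in>C. c $ x = 0} = q * q ^ m" using fiber_card[OF C that] cardC q_def by simp
    then have "card {c\<in>C. c $ x = 0} = q ^ m" using q2 by simp
    then show ?thesis using cardC by (simp add: algebra_simps)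
  qed
  have "(\<Sum>c\<in>C. word_wt c) = code_wt C * (q ^ m * (q - 1))"
  proof -
    have "(\<Sum>c\<in>C. word_wt c) = (\<Sum>x\<in>code_supp C. card C - card {c\<in>C. c $ x = 0})"
      by (rule sum_wt[OF C])
    also have "\<dots> = (\<Sum>x\<in>code_supp C. q ^ m * (q - 1))"
      by (rule sum.cong[OF refl]) (rule fib)
    also have "\<dots> = code_wt C * (q ^ m * (q - 1))"
      unfolding code_wt_def by simp
    finally show ?thesis .
  qed
  moreover have "word_wt (0::'a^'n) = 0" unfolding word_wt_eq by simp
  moreover have "0 \<in> C" using C vec.subspace_0 by blast
  ultimately have sumC: "(\<Sum>c\<in>C-{0}. word_wt c) = code_wt C * (q ^ m * (q - 1))"
    using sum.remove[OF finite \<open>0 \<in> C\<close>, of word_wt] by simp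
  have cardC0: "card (C - {0}) = q * q ^ m - 1" using \<open>0 \<in> C\<close> cardC by simp
  have "(\<Sum>c\<in>C-{0}. real (word_wt c) - of_int \<alpha>) = 0"
  proof -
    have "(\<Sum>c\<in>C-{0}. real (word_wt c) - of_int \<alpha>)
        = real (code_wt C * (q ^ m * (q - 1))) - real (q * q ^ m - 1) * of_int \<alpha>"
      unfolding sum_subtractf sum_constant of_nat_sum[symmetric] sumC cardC0 by simp
    also have "\<dots> = 0"
    proof -
      have qq: "1 \<le> q * q ^ m" using q2 by (simp add: Suc_le_eq)
      have e1: "real (q * q ^ m - 1) = real q * real q ^ m - 1" using qq by (simp add: of_nat_diff)
      have e2: "real (code_wt C * (q ^ m * (q - 1))) = real (code_wt C) * (real q ^ m * (real q - 1))"
        using q2 by (simp add: of_nat_diff)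
      have e3: "real q ^ k = real q * real q ^ m" using km by simp
      have wC': "real (code_wt C) * (real q ^ m * (real q - 1)) = of_int \<alpha> * (real q * real q ^ m - 1)"
        using wC e3 by simp
      show ?thesis unfolding e1 e2 wC' by simp
    qed
    finally show ?thesis .
  qed
  note h0 = this
  have hn: "\<forall>c'\<in>C-{0}. 0 \<le> real (word_wt c') - of_int \<alpha>"
  proof
    fix c' assume "c' \<in> C - {0}"
    then have "gen_hamming_wt C 1 \<le> word_wt c'" using lb by blast
    then have "real (gen_hamming_wt C 1) \<le> real (word_wt c')" by simp
    then show "0 \<le> real (word_wt c') - of_int \<alpha>" using d1 by simp
  qed
  have fin: "finite (C - {0})" by (rule finite)
  have all0: "\<forall>c'\<in>C-{0}. real (word_wt c') - of_int \<alpha> = 0"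
    using sum_nonneg_eq_0_iff[OF fin, of "\<lambda>c. real (word_wt c) - of_int \<alpha>"] hn h0 by blast
  have "c \<in> C - {0}" using cC c0 by simp
  then have "real (word_wt c) - of_int \<alpha> = 0" using all0 by blast
  then have "real (word_wt c) = of_int \<alpha>" by simp
  then show "int (word_wt c) = \<alpha>" by linarith
qed

end
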